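(* Let $\lambda\ge1$, $\mu\ge0$, let $\varphi(z)=1+B_1z+B_2z^2+\cdots$ be as in the context, and let $f(z)=z+\sum_{n\ge2}a_nz^n\in\mathcal N^{\mu,\lambda}_\Sigma(\varphi)$. Then $$|a_3-a_2^2|\le\frac{B_1}{2\lambda+\mu}.$$
   Context: Let $\mathbb U=\{z\in\mathbb C:|z|<1\}$ and let $\mathcal A$ be the class of functions $f(z)=z+\sum_{n\ge2}a_nz^n$ analytic in $\mathbb U$. $\Sigma$ denotes the class of bi-univalent functions: $f\in\mathcal A$ univalent in $\mathbb U$ such that the inverse $f^{-1}$ (defined near $0$) extends to an analytic univalent function on $\mathbb U$; this extension is denoted $g=f^{-1}$. For $F,G$ analytic in $\mathbb U$, $F\prec G$ means there is an analytic $w:\mathbb U\to\mathbb U$ with $w(0)=0$ and $F=G\circ w$. Throughout, $\varphi$ is analytic and univalent in $\mathbb U$ with $\Re\varphi>0$, $\varphi(0)=1$, $\varphi'(0)>0$, $\varphi(\mathbb U)$ starlike with respect to $1$ and symmetric with respect to the real axis, and $\varphi(z)=1+B_1z+B_2z^2+\cdots$ with all $B_j$ real and $B_1>0$. For $\lambda\ge1$, $\mu\ge0$, $\mathcal N^{\mu,\lambda}_\Sigma(\varphi)$ is the set of $f\in\Sigma$ with $(1-\lambda)(f(z)/z)^{\mu}+\lambda f'(z)(f(z)/z)^{\mu-1}\prec\varphi(z)$ and $(1-\lambda)(g(w)/w)^{\mu}+\lambda g'(w)(g(w)/w)^{\mu-1}\prec\varphi(w)$, where $g=f^{-1}$ and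 powers are principal branches equal to $1$ at the origin. *)

theory Defs
  imports "HOL-Analysis.Analysis"
begin

abbreviation unit_disk :: "complex set" where
  "unit_disk \<equiv> ball 0 1"

definition coef :: "(complex \<Rightarrow> complex) \<Rightarrow> nat \<Rightarrow> complex" where
  "coef f n = (deriv ^^ n) f 0 / of_nat (fact n)"

definition class_A :: "(complex \<Rightarrow> complex) \<Rightarrow> bool" where
  "class_A f \<longleftrightarrow> f holomorphic_on unit_disk \<and> f 0 = 0 \<and> deriv f 0 = 1"

definition inverse_ext :: "(complex \<Rightarrow> complex) \<Rightarrow> (complex \<Rightarrow> complex) \<Rightarrow> bool" where
  "inverse_ext f g \<longleftrightarrow> g holomorphic_on unit_disk \<and> inj_on g unit_disk \<and>
     (\<exists>r>0. \<forall>w\<in>ball 0 r. g w \<in> unit_disk \<and> f (g w) = w)"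

definition bi_univalent :: "(complex \<Rightarrow> complex) \<Rightarrow> bool" where
  "bi_univalent f \<longleftrightarrow> class_A f \<and> inj_on f unit_disk \<and> (\<exists>g. inverse_ext f g)"

definition subord :: "(complex \<Rightarrow> complex) \<Rightarrow> (complex \<Rightarrow> complex) \<Rightarrow> bool" where
  "subord F G \<longleftrightarrow> (\<exists>w. w holomorphic_on unit_disk \<and> w ` unit_disk \<subseteq> unit_disk \<and> w 0 = 0 \<and>
      (\<forall>z\<in>unit_disk. F z = G (w z)))"

text \<open>L is the holomorphic branch of log (f(z)/z) on the disk with L(0)=0,
  so that (f(z)/z)^a = exp (a * L z) is the branch equal to 1 at the origin.\<close>
definition log_branch :: "(complex \<Rightarrow> complex) \<Rightarrow> (complex \<Rightarrow> complex) \<Rightarrow> bool" where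
  "log_branch f L \<longleftrightarrow> L holomorphic_on unit_disk \<and> L 0 = 0 \<and>
      (\<forall>z\<in>unit_disk - {0}. exp (L z) = f z / z)"

definition N_expr :: "real \<Rightarrow> real \<Rightarrow> (complex \<Rightarrow> complex) \<Rightarrow> (complex \<Rightarrow> complex) \<Rightarrow> complex \<Rightarrow> complex" where
  "N_expr lam mu f L z =
     (1 - of_real lam) * exp (of_real mu * L z) + of_real lam * deriv f z * exp (of_real (mu - 1) * L z)"

definition phi_ok :: "(complex \<Rightarrow> complex) \<Rightarrow> bool" where
  "phi_ok phi \<longleftrightarrow> phi holomorphic_on unit_disk \<and> inj_on phi unit_disk \<and>
     (\<forall>z\<in>unit_disk. Re (phi z) > 0) \<and> phi 0 = 1 \<and>
     deriv phi 0 \<in> \<real> \<and> Re (deriv phi 0) > 0 \<and>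
     (\<forall>y\<in>phi ` unit_disk. closed_segment 1 y \<subseteq> phi ` unit_disk) \<and>
     (\<forall>y\<in>phi ` unit_disk. cnj y \<in> phi ` unit_disk) \<and>
     (\<forall>n. coef phi n \<in> \<real>)"

definition N_class :: "real \<Rightarrow> real \<Rightarrow> (complex \<Rightarrow> complex) \<Rightarrow> (complex \<Rightarrow> complex) \<Rightarrow> bool" where
  "N_class mu lam phi f \<longleftrightarrow> bi_univalent f \<and>
     (\<exists>g. inverse_ext f g \<and>
        (\<exists>L. log_branch f L \<and> subord (N_expr lam mu f L) phi) \<and>
        (\<exists>M. log_branch g M \<and> subord (N_expr lam mu g M) phi))"

end

theory Submission
  imports Defs "HOL-Complex_Analysis.Complex_Analysis"
begin


definition bnd :: "(complex \<Rightarrow> complex) \<Rightarrow> real \<Rightarrow> bool" where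
  "bnd q r \<longleftrightarrow> (\<exists>B. \<forall>z. cmod z < r \<longrightarrow> cmod (q z) \<le> B)"

lemma bnd_const: "bnd (\<lambda>z. c) r" unfolding bnd_def by blast
lemma bnd_id: "bnd (\<lambda>z. z) r" unfolding bnd_def by (rule exI[of _ r]) auto
lemma bnd_add: "bnd f r \<Longrightarrow> bnd g r \<Longrightarrow> bnd (\<lambda>z. f z + g z) r"
  unfolding bnd_def by (metis (no_types, opaque_lifting) add_mono norm_triangle_ineq order_trans)
lemma bnd_mult: "bnd f r \<Longrightarrow> bnd g r \<Longrightarrow> bnd (\<lambda>z. f z * g z) r"
proof -
  assume "bnd f r" "bnd g r"
  then obtain A B where A: "\<And>z. cmod z < r \<Longrightarrow> cmod (f z) \<le> A" and B: "\<And>z. cmod z < r \<Longrightarrow> cmod (g z) \<le> B"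
    unfolding bnd_def by blast
  show ?thesis unfolding bnd_def
  proof (intro exI allI impI)
    fix z assume z: "cmod z < r"
    have "cmod (f z * g z) = cmod (f z) * cmod (g z)" by (simp add: norm_mult)
    also have "\<dots> \<le> A * B" using A[OF z] B[OF z] by (simp add: mult_mono')
    finally show "cmod (f z * g z) \<le> A * B" .
  qed
qed
lemma bnd_pow: "bnd f r \<Longrightarrow> bnd (\<lambda>z. f z ^ n) r"
  by (induction n) (auto intro: bnd_const bnd_mult)
lemma bnd_mono: "bnd f r \<Longrightarrow> s \<le> r \<Longrightarrow> bnd f s"
  unfolding bnd_def by (meson less_le_trans)

lemmas bnd_intros = bnd_add bnd_mult bnd_pow bnd_id bnd_const

definition ex3 :: "(complex \<Rightarrow> complex) \<Rightarrow> complex \<Rightarrow> complex \<Rightarrow> complex \<Rightarrow> bool" where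
  "ex3 h a b c \<longleftrightarrow> (\<exists>r q. r > 0 \<and> bnd q r \<and> (\<forall>z. cmod z < r \<longrightarrow> h z = a + b*z + c*z^2 + z^3 * q z))"

definition ex3p :: "(complex \<Rightarrow> complex) \<Rightarrow> complex \<Rightarrow> complex \<Rightarrow> complex \<Rightarrow> bool" where
  "ex3p h a b c \<longleftrightarrow> (\<exists>r q. r > 0 \<and> bnd q r \<and> (\<forall>z. 0 < cmod z \<and> cmod z < r \<longrightarrow> h z = a + b*z + c*z^2 + z^3 * q z))"

lemma ex3_ex3p: "ex3 h a b c \<Longrightarrow> ex3p h a b c"
  unfolding ex3_def ex3p_def by blast

lemma small_le0:
  fixes x A K r :: real
  assumes "0 < r" "\<And>t. 0 < t \<Longrightarrow> t < r \<Longrightarrow> x \<le> A * t + K * t^2"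
  shows "x \<le> 0"
proof -
  have "((\<lambda>t. A * t + K * t^2) \<longlongrightarrow> A * 0 + K * 0^2) (at_right 0)"
    by (intro tendsto_intros)
  then have lim: "((\<lambda>t. A * t + K * t^2) \<longlongrightarrow> 0) (at_right 0)" by simp
  have "eventually (\<lambda>t. x \<le> A * t + K * t^2) (at_right (0::real))"
    using assms unfolding eventually_at_right_field by blast
  from tendsto_lowerbound[OF lim this] show ?thesis by simp
qed

lemma ex3p_unique:
  assumes "ex3p h a b c" "ex3p h a' b' c'"
  shows "a = a' \<and> b = b' \<and> c = c'"
proof -
  obtain r q where r: "r > 0" "bnd q r" "\<And>z. 0 < cmod z \<Longrightarrow> cmod z < r \<Longrightarrow> h z = a + b*z + c*z^2 + z^3 * q z"
    using assms(1) unfolding ex3p_def by blast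
  obtain r' q' where r': "r' > 0" "bnd q' r'" "\<And>z. 0 < cmod z \<Longrightarrow> cmod z < r' \<Longrightarrow> h z = a' + b'*z + c'*z^2 + z^3 * q' z"
    using assms(2) unfolding ex3p_def by blast
  define s where "s = min r r'"
  have s: "s > 0" using r r' by (simp add: s_def)
  obtain B where B: "\<And>z. cmod z < s \<Longrightarrow> cmod (q z) \<le> B" using bnd_mono[OF r(2), of s] by (auto simp: s_def bnd_def)
  obtain B' where B': "\<And>z. cmod z < s \<Longrightarrow> cmod (q' z) \<le> B'" using bnd_mono[OF r'(2), of s] by (auto simp: s_def bnd_def)
  have eq: "(a - a') + (b - b') * of_real t + (c - c') * (of_real t)^2 = (of_real t)^3 * (q' t - q t)"
    if "0 < t" "t < s" for t :: real
    using r(3)[of "of_real t"] r'(3)[of "of_real t"] that by (auto simp: s_def algebra_simps)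
  have nrm: "cmod ((of_real t)^3 * (q' t - q t)) \<le> t^3 * (B + B')" if "0 < t" "t < s" for t :: real
  proof -
    have "cmod (q' t - q t) \<le> B + B'" using B[of "of_real t"] B'[of "of_real t"] that
      by (smt (verit, best) norm_of_real norm_triangle_ineq4)
    then show ?thesis using that by (simp add: norm_mult norm_power mult_left_mono)
  qed
  have tri: "cmod (x - y - z) \<le> cmod x + cmod y + cmod z" for x y z :: complex
    using norm_triangle_ineq4[of "x - y" z] norm_triangle_ineq4[of x y] by linarith
  have qb: "cmod (q' t - q t) \<le> B + B'" if "0 < t" "t < s" for t :: real
    using B[of "of_real t"] B'[of "of_real t"] that norm_triangle_ineq4[of "q' t" "q t"] by simp
  have "cmod (a - a') \<le> 0"
  proof (rule small_le0[OF s])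
    fix t :: real assume t: "0 < t" "t < s"
    have "a - a' = (of_real t)^3 * (q' t - q t) - (b - b') * of_real t - (c - c') * (of_real t)^2"
      using eq[OF t] by (simp add: algebra_simps)
    then have "cmod (a - a') \<le> t^3 * (B + B') + cmod (b - b') * t + cmod (c - c') * t^2"
      using tri nrm[OF t] t by (smt (verit) norm_mult norm_of_real norm_power abs_of_pos)
    also have "t^3 * (B + B') \<le> t^2 * (s * \<bar>B + B'\<bar>)"
    proof -
      have "t^3 * (B + B') \<le> t^2 * (t * \<bar>B + B'\<bar>)" using t by (simp add: power3_eq_cube power2_eq_square abs_ge_self mult_left_mono)
      also have "\<dots> \<le> t^2 * (s * \<bar>B + B'\<bar>)" using t by (intro mult_left_mono mult_right_mono) auto
      finally show ?thesis by simp
    qed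
    finally show "cmod (a - a') \<le> cmod (b - b') * t + (cmod (c - c') + s * \<bar>B + B'\<bar>) * t^2"
      by (simp add: algebra_simps)
  qed
  then have aa: "a = a'" by simp
  have eq2: "(b - b') + (c - c') * of_real t = (of_real t)^2 * (q' t - q t)" if "0 < t" "t < s" for t :: real
  proof -
    have "of_real t * ((b - b') + (c - c') * of_real t) = of_real t * ((of_real t)^2 * (q' t - q t))"
      using eq[OF that] aa by (simp add: algebra_simps power2_eq_square power3_eq_cube)
    then show ?thesis using that by simp
  qed
  have "cmod (b - b') \<le> 0"
  proof (rule small_le0[OF s])
    fix t :: real assume t: "0 < t" "t < s"
    have "b - b' = (of_real t)^2 * (q' t - q t) - (c - c') * of_real t - 0"
      using eq2[OF t] by (simp add: algebra_simps)
    then have "cmod (b - b') \<le> t^2 * cmod (q' t - q t) + cmod (c - c') * t"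
      using tri[of "(of_real t)^2 * (q' t - q t)" "(c - c') * of_real t" 0] t by (simp add: norm_mult norm_power)
    also have "\<dots> \<le> t^2 * (B + B') + cmod (c - c') * t"
      using qb[OF t] t by (simp add: mult_left_mono)
    finally show "cmod (b - b') \<le> cmod (c - c') * t + (B + B') * t^2" by (simp add: algebra_simps)
  qed
  then have bb: "b = b'" by simp
  have "cmod (c - c') \<le> 0"
  proof (rule small_le0[OF s])
    fix t :: real assume t: "0 < t" "t < s"
    have "(c - c') = of_real t * (q' t - q t)"
    proof -
      have "of_real t * (c - c') = of_real t * (of_real t * (q' t - q t))"
        using eq2[OF t] bb by (simp add: algebra_simps power2_eq_square)
      then show ?thesis using t by simp
    qed
    then have "cmod (c - c') \<le> t * (B + B')" using t qb[OF t] by (simp add: norm_mult mult_left_mono)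
    then show "cmod (c - c') \<le> (B + B') * t + 0 * t^2" by (simp add: algebra_simps)
  qed
  then show ?thesis using aa bb by simp
qed

lemma ex3_cong:
  assumes "ex3 h a b c" "s > 0" "\<And>z. cmod z < s \<Longrightarrow> k z = h z"
  shows "ex3 k a b c"
proof -
  obtain r q where r: "r > 0" "bnd q r" "\<And>z. cmod z < r \<Longrightarrow> h z = a + b*z + c*z^2 + z^3 * q z"
    using assms(1) unfolding ex3_def by blast
  show ?thesis unfolding ex3_def
    by (rule exI[of _ "min r s"], rule exI[of _ q]) (use r assms(2,3) bnd_mono[OF r(2)] in auto)
qed

lemma ex3p_cong:
  assumes "ex3p h a b c" "s > 0" "\<And>z. 0 < cmod z \<Longrightarrow> cmod z < s \<Longrightarrow> k z = h z"
  shows "ex3p k a b c"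
proof -
  obtain r q where r: "r > 0" "bnd q r" "\<And>z. 0 < cmod z \<Longrightarrow> cmod z < r \<Longrightarrow> h z = a + b*z + c*z^2 + z^3 * q z"
    using assms(1) unfolding ex3p_def by blast
  show ?thesis unfolding ex3p_def
    by (rule exI[of _ "min r s"], rule exI[of _ q]) (use r assms(2,3) bnd_mono[OF r(2)] in auto)
qed

lemma ex3_const: "ex3 (\<lambda>z. C) C 0 0"
  unfolding ex3_def by (rule exI[of _ 1], rule exI[of _ "\<lambda>z. 0"]) (auto intro: bnd_const)

lemma ex3_add:
  assumes "ex3 h a b c" "ex3 k a' b' c'"
  shows "ex3 (\<lambda>z. h z + k z) (a + a') (b + b') (c + c')"
proof -
  obtain r q where r: "r > 0" "bnd q r" "\<And>z. cmod z < r \<Longrightarrow> h z = a + b*z + c*z^2 + z^3 * q z"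
    using assms(1) unfolding ex3_def by blast
  obtain r' q' where r': "r' > 0" "bnd q' r'" "\<And>z. cmod z < r' \<Longrightarrow> k z = a' + b'*z + c'*z^2 + z^3 * q' z"
    using assms(2) unfolding ex3_def by blast
  define s where "s = min r r'"
  have qs: "bnd q s" "bnd q' s" using bnd_mono r r' by (auto simp: s_def)
  show ?thesis unfolding ex3_def
  proof (intro exI conjI allI impI)
    show "s > 0" using r r' by (simp add: s_def)
    show "bnd (\<lambda>z. q z + q' z) s" by (intro bnd_intros qs)
    fix z assume "cmod z < s"
    then show "h z + k z = a + a' + (b + b') * z + (c + c') * z\<^sup>2 + z ^ 3 * (q z + q' z)"
      using r(3)[of z] r'(3)[of z] by (simp add: s_def algebra_simps)
  qed
qed

lemma ex3_scale:
  assumes "ex3 h a b c"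
  shows "ex3 (\<lambda>z. C * h z) (C * a) (C * b) (C * c)"
proof -
  obtain r q where r: "r > 0" "bnd q r" "\<And>z. cmod z < r \<Longrightarrow> h z = a + b*z + c*z^2 + z^3 * q z"
    using assms(1) unfolding ex3_def by blast
  show ?thesis unfolding ex3_def
  proof (intro exI conjI allI impI)
    show "r > 0" by (fact r)
    show "bnd (\<lambda>z. C * q z) r" by (intro bnd_intros r)
    fix z assume "cmod z < r"
    then show "C * h z = C * a + C * b * z + C * c * z\<^sup>2 + z ^ 3 * (C * q z)"
      using r(3)[of z] by (simp add: algebra_simps)
  qed
qed

lemma ex3_mult:
  assumes "ex3 h a b c" "ex3 k a' b' c'"
  shows "ex3 (\<lambda>z. h z * k z) (a * a') (a * b' + b * a') (a * c' + b * b' + c * a')"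
proof -
  obtain r q where r: "r > 0" "bnd q r" "\<And>z. cmod z < r \<Longrightarrow> h z = a + b*z + c*z^2 + z^3 * q z"
    using assms(1) unfolding ex3_def by blast
  obtain r' q' where r': "r' > 0" "bnd q' r'" "\<And>z. cmod z < r' \<Longrightarrow> k z = a' + b'*z + c'*z^2 + z^3 * q' z"
    using assms(2) unfolding ex3_def by blast
  define s where "s = min r r'"
  have qs: "bnd q s" "bnd q' s" using bnd_mono r r' by (auto simp: s_def)
  show ?thesis unfolding ex3_def
  proof (intro exI conjI allI impI)
    show "s > 0" using r r' by (simp add: s_def)
    show "bnd (\<lambda>z. (b*c' + c*b') + z*(c*c') + (a + b*z + c*z^2) * q' z + (a' + b'*z + c'*z^2) * q z + z^3 * q z * q' z) s"
      by (intro bnd_intros qs)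
    fix z assume "cmod z < s"
    then show "h z * k z = a * a' + (a * b' + b * a') * z + (a * c' + b * b' + c * a') * z\<^sup>2 +
      z ^ 3 * ((b*c' + c*b') + z*(c*c') + (a + b*z + c*z^2) * q' z + (a' + b'*z + c'*z^2) * q z + z^3 * q z * q' z)"
      using r(3)[of z] r'(3)[of z] by (simp add: s_def) (simp add: algebra_simps power2_eq_square power3_eq_cube)
  qed
qed

lemma ex3_comp:
  assumes "ex3 h c0 c1 c2" "ex3 k 0 d1 d2"
  shows "ex3 (\<lambda>z. h (k z)) c0 (c1 * d1) (c1 * d2 + c2 * d1^2)"
proof -
  obtain rh qh where rh: "rh > 0" "bnd qh rh" "\<And>z. cmod z < rh \<Longrightarrow> h z = c0 + c1*z + c2*z^2 + z^3 * qh z"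
    using assms(1) unfolding ex3_def by blast
  obtain rk qk where rk: "rk > 0" "bnd qk rk" "\<And>z. cmod z < rk \<Longrightarrow> k z = 0 + d1*z + d2*z^2 + z^3 * qk z"
    using assms(2) unfolding ex3_def by blast
  obtain Bh where Bh: "\<And>z. cmod z < rh \<Longrightarrow> cmod (qh z) \<le> Bh" using rh(2) unfolding bnd_def by blast
  obtain Bk where Bk: "\<And>z. cmod z < rk \<Longrightarrow> cmod (qk z) \<le> Bk" using rk(2) unfolding bnd_def by blast
  define K where "K = cmod d1 + cmod d2 + \<bar>Bk\<bar> + 1"
  have K: "K > 0" unfolding K_def by (smt (verit) norm_ge_zero)
  define s where "s = min rk (min 1 (rh / K))"
  have s: "s > 0" using rk rh K by (simp add: s_def)
  define m where "m z = d1 + d2 * z + z^2 * qk z" for z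
  have km: "k z = z * m z" if "cmod z < s" for z
    using rk(3)[of z] that by (simp add: s_def m_def algebra_simps power2_eq_square power3_eq_cube)
  have kbound: "cmod (k z) < rh" if z: "cmod z < s" for z
  proof -
    have z1: "cmod z \<le> 1" "cmod z < rk" using z by (auto simp: s_def)
    have "cmod (m z) \<le> cmod d1 + cmod (d2 * z) + cmod (z^2 * qk z)"
      unfolding m_def by (meson norm_triangle_ineq add_mono order_trans order_refl)
    also have "\<dots> \<le> cmod d1 + cmod d2 + \<bar>Bk\<bar>"
    proof -
      have "cmod (d2 * z) \<le> cmod d2" using z1 by (simp add: norm_mult mult_left_le)
      moreover have "cmod (z^2 * qk z) \<le> \<bar>Bk\<bar>"
      proof -
        have "cmod (z^2) \<le> 1" using z1 by (simp add: norm_power power_le_one)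
        moreover have "cmod (qk z) \<le> \<bar>Bk\<bar>" using Bk[OF z1(2)] by linarith
        ultimately have "cmod (z^2) * cmod (qk z) \<le> 1 * \<bar>Bk\<bar>" by (intro mult_mono) auto
        then show ?thesis by (simp add: norm_mult)
      qed
      ultimately show ?thesis by linarith
    qed
    finally have "cmod (m z) \<le> K" unfolding K_def by linarith
    then have "cmod (k z) \<le> cmod z * K" using km[OF z] by (simp add: norm_mult mult_left_mono)
    also have "\<dots> < (rh / K) * K" using z K by (intro mult_strict_right_mono) (auto simp: s_def)
    also have "\<dots> = rh" using K by simp
    finally show ?thesis .
  qed
  have bqh: "bnd (\<lambda>z. qh (k z)) s" unfolding bnd_def using Bh kbound by blast
  have bqk: "bnd qk s" using bnd_mono[OF rk(2)] by (simp add: s_def)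
  show ?thesis unfolding ex3_def
  proof (intro exI conjI allI impI)
    show "s > 0" by (fact s)
    show "bnd (\<lambda>z. c1 * qk z + c2 * (d2 + z * qk z) * ((d1 + d2 * z + z^2 * qk z) + d1) + (d1 + d2 * z + z^2 * qk z)^3 * qh (k z)) s"
      by (intro bnd_intros bqk bqh)
    fix z assume z: "cmod z < s"
    have "h (k z) = c0 + c1 * k z + c2 * (k z)^2 + (k z)^3 * qh (k z)" using rh(3)[OF kbound[OF z]] .
    also have "\<dots> = c0 + c1 * d1 * z + (c1 * d2 + c2 * d1\<^sup>2) * z\<^sup>2 +
        z ^ 3 * (c1 * qk z + c2 * (d2 + z * qk z) * ((d1 + d2 * z + z^2 * qk z) + d1) + (d1 + d2 * z + z^2 * qk z)^3 * qh (k z))"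
      unfolding km[OF z] m_def by (simp add: algebra_simps power2_eq_square power3_eq_cube)
    finally show "h (k z) = c0 + c1 * d1 * z + (c1 * d2 + c2 * d1\<^sup>2) * z\<^sup>2 +
        z ^ 3 * (c1 * qk z + c2 * (d2 + z * qk z) * ((d1 + d2 * z + z^2 * qk z) + d1) + (d1 + d2 * z + z^2 * qk z)^3 * qh (k z))" .
  qed
qed




lemma coef_0: "coef h 0 = h 0" by (simp add: coef_def)
lemma coef_1: "coef h 1 = deriv h 0" by (simp add: coef_def)
lemma coef_deriv: "coef (deriv h) n = of_nat (Suc n) * coef h (Suc n)"
proof -
  have e: "(deriv ^^ n) (deriv h) = (deriv ^^ Suc n) h" by (simp add: funpow_Suc_right del: funpow.simps)
  define X where "X = (deriv ^^ Suc n) h 0"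
  have f: "fact (Suc n) = of_nat (Suc n) * (fact n :: complex)" by (simp add: fact_Suc del: of_nat_Suc)
  have nz: "(fact n :: complex) \<noteq> 0" "(of_nat (Suc n) :: complex) \<noteq> 0" by (simp_all del: of_nat_Suc)
  have "coef (deriv h) n = X / fact n" unfolding coef_def X_def e by simp
  moreover have "coef h (Suc n) = X / (of_nat (Suc n) * fact n)" unfolding coef_def X_def by (simp add: algebra_simps)
  ultimately show ?thesis using nz by (simp del: of_nat_Suc)
qed

lemma sum_at0: "(\<Sum>i\<le>m. coef h i * (0::complex)^i) = h 0"
  by (simp add: sum.atMost_Suc_shift coef_0 del: sum.atMost_Suc)

lemma sum3: "(\<Sum>i\<le>2. c i * (z::complex)^i) = c 0 + c 1 * z + c 2 * z^2"
  by (simp add: eval_nat_numeral)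
lemma sum4: "(\<Sum>i\<le>3. c i * (z::complex)^i) = c 0 + c 1 * z + c 2 * z^2 + c 3 * z^3"
  by (simp add: eval_nat_numeral)

lemma taylor_bnd:
  assumes "h holomorphic_on ball 0 1"
  shows "\<exists>q. bnd q (1/2) \<and> (\<forall>z. cmod z < 1/2 \<longrightarrow> h z = (\<Sum>i\<le>m. coef h i * z^i) + z^(Suc m) * q z)"
proof -
  let ?S = "cball (0::complex) (1/2)"
  have sub: "?S \<subseteq> ball 0 1" by auto
  have hol: "(deriv^^i) h holomorphic_on ball 0 1" for i using holomorphic_higher_deriv[OF assms] by simp
  have der: "((deriv^^i) h has_field_derivative (deriv^^(Suc i)) h x) (at x within ?S)" if "x \<in> ?S" "i \<le> m" for i x
    using holomorphic_derivI[OF hol[of i] open_ball, of x ?S] that sub by auto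
  have "continuous_on ?S ((deriv^^(Suc m)) h)"
    using holomorphic_on_imp_continuous_on[OF hol] continuous_on_subset sub by blast
  then have "compact (((deriv^^(Suc m)) h) ` ?S)" by (intro compact_continuous_image) auto
  then have "bounded (((deriv^^(Suc m)) h) ` ?S)" by (rule compact_imp_bounded)
  then obtain B where "\<forall>y\<in>((deriv^^(Suc m)) h) ` ?S. cmod y \<le> B" unfolding bounded_iff by blast
  then have B: "\<And>x. x \<in> ?S \<Longrightarrow> cmod ((deriv^^(Suc m)) h x) \<le> B" by blast
  have T: "cmod (h z - (\<Sum>i\<le>m. (deriv^^i) h 0 * (z-0)^i / fact i)) \<le> B * cmod(z-0)^Suc m / fact m"
    if "z \<in> ?S" for z
  proof -
    have "(0::complex) \<in> ?S" by simp
    from complex_Taylor[of ?S m "\<lambda>i. (deriv^^i) h" B 0 z, OF convex_cball der B this that]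
    show ?thesis by simp
  qed
  have sums: "(\<Sum>i\<le>m. (deriv^^i) h 0 * (z-0)^i / fact i) = (\<Sum>i\<le>m. coef h i * z^i)" for z
    by (simp add: coef_def)
  define q where "q z = (if z = 0 then 0 else (h z - (\<Sum>i\<le>m. coef h i * z^i)) / z^Suc m)" for z
  show ?thesis
  proof (intro exI conjI allI impI)
    show "bnd q (1/2)" unfolding bnd_def
    proof (intro exI allI impI)
      fix z :: complex assume z: "cmod z < 1/2"
      show "cmod (q z) \<le> \<bar>B\<bar> / fact m"
      proof (cases "z = 0")
        case True then show ?thesis by (simp add: q_def)
      next
        case False
        have c0: "cmod (h z - (\<Sum>i\<le>m. coef h i * z^i)) \<le> B * cmod z ^ Suc m / fact m"
          using T[of z] z sums[of z] by simp
        also have "\<dots> \<le> \<bar>B\<bar> * cmod z ^ Suc m / fact m"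
          by (intro divide_right_mono mult_right_mono) auto
        finally have c1: "cmod (h z - (\<Sum>i\<le>m. coef h i * z^i)) \<le> \<bar>B\<bar> / fact m * cmod z ^ Suc m" by simp
        have cp: "cmod z ^ Suc m > 0" using False by simp
        have "cmod (h z - (\<Sum>i\<le>m. coef h i * z^i)) / cmod z ^ Suc m \<le> \<bar>B\<bar> / fact m"
          using c1 pos_divide_le_eq[OF cp] by blast
        then show ?thesis using False by (simp add: q_def norm_divide norm_power norm_mult)
      qed
    qed
    fix z :: complex assume "cmod z < 1/2"
    show "h z = (\<Sum>i\<le>m. coef h i * z ^ i) + z ^ Suc m * q z"
      by (cases "z = 0") (simp_all add: q_def sum_at0 coef_0 del: power_Suc)
  qed
qed

lemma taylor_ex3:
  assumes "h holomorphic_on ball 0 1"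
  shows "ex3 h (h 0) (deriv h 0) (coef h 2)"
proof -
  obtain q where q: "bnd q (1/2)" "\<And>z. cmod z < 1/2 \<Longrightarrow> h z = (\<Sum>i\<le>2. coef h i * z^i) + z^(Suc 2) * q z"
    using taylor_bnd[OF assms, of 2] by blast
  show ?thesis unfolding ex3_def
  proof (rule exI[of _ "1/2"], rule exI[of _ q], intro conjI allI impI)
    fix z :: complex assume "cmod z < 1/2"
    from q(2)[OF this] show "h z = h 0 + deriv h 0 * z + coef h 2 * z\<^sup>2 + z ^ 3 * q z"
      unfolding sum3 coef_0 coef_1 by (simp add: eval_nat_numeral)
  qed (use q in auto)
qed

lemma taylor_div:
  assumes "h holomorphic_on ball 0 1" "h 0 = 0"
  shows "ex3p (\<lambda>z. h z / z) (coef h 1) (coef h 2) (coef h 3)"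
proof -
  obtain q where q: "bnd q (1/2)" "\<And>z. cmod z < 1/2 \<Longrightarrow> h z = (\<Sum>i\<le>3. coef h i * z^i) + z^(Suc 3) * q z"
    using taylor_bnd[OF assms(1), of 3] by blast
  show ?thesis unfolding ex3p_def
  proof (rule exI[of _ "1/2"], rule exI[of _ q], intro conjI allI impI)
    fix z :: complex assume z: "0 < cmod z \<and> cmod z < 1/2"
    then have "z \<noteq> 0" by auto
    then show "h z / z = coef h 1 + coef h 2 * z + coef h 3 * z\<^sup>2 + z ^ 3 * q z"
    proof -
      have "h z = z * (coef h 1 + coef h 2 * z + coef h 3 * z\<^sup>2 + z ^ 3 * q z)"
        using q(2)[of z] z assms(2) unfolding sum4 coef_0 by (simp add: algebra_simps eval_nat_numeral)
      then show ?thesis using \<open>z \<noteq> 0\<close> by simp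
    qed
  qed (use q in auto)
qed

lemma ex3_exp: "ex3 exp 1 1 (1/2)"
proof -
  have dexp: "deriv exp = (exp :: complex \<Rightarrow> complex)" by (rule ext) (rule DERIV_imp_deriv[OF DERIV_exp])
  have d: "(deriv ^^ n) exp = (exp :: complex \<Rightarrow> complex)" for n
    by (induction n) (simp_all add: dexp)
  have "ex3 exp (exp 0) (deriv exp 0) (coef exp 2)" by (rule taylor_ex3) (auto intro: holomorphic_intros)
  then show ?thesis by (simp add: coef_def d dexp)
qed



lemma ex3_eq: "ex3 h a b c \<Longrightarrow> a = a' \<Longrightarrow> b = b' \<Longrightarrow> c = c' \<Longrightarrow> ex3 h a' b' c'" by simp

lemma ex3_exp_scale:
  assumes "ex3 L 0 l1 l2"
  shows "ex3 (\<lambda>z. exp (C * L z)) 1 (C * l1) (C * l2 + C^2 * l1^2 / 2)"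
proof -
  have "ex3 (\<lambda>z. C * L z) (C * 0) (C * l1) (C * l2)" by (rule ex3_scale[OF assms])
  then have "ex3 (\<lambda>z. C * L z) 0 (C * l1) (C * l2)" by simp
  from ex3_comp[OF ex3_exp this] show ?thesis
    by (rule ex3_eq) (simp_all add: power_mult_distrib)
qed

lemma coef_le1:
  assumes hol: "w holomorphic_on ball 0 1" and bd: "\<And>z. z \<in> ball 0 1 \<Longrightarrow> cmod (w z) < 1"
  shows "cmod (coef w n) \<le> 1"
proof -
  define x where "x = cmod (coef w n)"
  have le: "x * r^n \<le> 1" if r: "0 < r" "r < 1" for r :: real
  proof -
    have sub: "cball (0::complex) r \<subseteq> ball 0 1" using r by auto
    have "cmod ((deriv ^^ n) w 0) \<le> fact n * 1 / r^n"
    proof (rule Cauchy_inequality)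
      show "w holomorphic_on ball 0 r" using hol sub by (meson ball_subset_cball holomorphic_on_subset order_trans)
      show "continuous_on (cball 0 r) w" using holomorphic_on_imp_continuous_on[OF hol] sub continuous_on_subset by blast
      show "0 < r" by (fact r)
      fix y :: complex assume "cmod (0 - y) = r"
      then have "y \<in> ball 0 1" using r by simp
      then show "cmod (w y) \<le> 1" using bd by (simp add: less_imp_le)
    qed
    then have "x \<le> 1 / r^n" unfolding x_def coef_def by (simp add: norm_divide divide_le_eq field_simps)
    then show ?thesis using r by (simp add: field_simps)
  qed
  have lim: "((\<lambda>r. x * r^n) \<longlongrightarrow> x * 1^n) (at_left (1::real))" by (intro tendsto_intros)
  have ev: "eventually (\<lambda>r. x * r^n \<le> 1) (at_left (1::real))"
    unfolding eventually_at_left_field by (rule exI[of _ 0]) (auto intro: le)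
  have "x * 1^n \<le> 1" by (rule tendsto_upperbound[OF lim ev]) simp
  then show ?thesis by (simp add: x_def)
qed


lemma main_gen:
  fixes lam mu :: real
  assumes hol: "h holomorphic_on unit_disk" and h0: "h 0 = 0" and lb: "log_branch h L"
    and sub: "subord (N_expr lam mu h L) phi" and phol: "phi holomorphic_on unit_disk" and p0: "phi 0 = 1"
  shows "coef h 1 = 1 \<and> ex3 (\<lambda>z. exp (L z)) 1 (coef h 2) (coef h 3) \<and>
    (\<exists>w1 w2. cmod w2 \<le> 1 \<and> (of_real mu + of_real lam) * coef h 2 = coef phi 1 * w1 \<and>
      (of_real mu + 2 * of_real lam) * (coef h 3 + (of_real mu - 1) / 2 * (coef h 2)^2)
        = coef phi 1 * w2 + coef phi 2 * w1^2)"
proof -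
  from lb have Lhol: "L holomorphic_on unit_disk" and L0: "L 0 = 0"
    and Lexp: "\<And>z. z \<in> unit_disk - {0} \<Longrightarrow> exp (L z) = h z / z"
    unfolding log_branch_def by auto
  define a1 where "a1 = coef h 1"
  define a2 where "a2 = coef h 2"
  define a3 where "a3 = coef h 3"
  define l1 where "l1 = deriv L 0"
  define l2 where "l2 = coef L 2"
  have exL: "ex3 L 0 l1 l2" using taylor_ex3[OF Lhol] L0 by (simp add: l1_def l2_def)
  have E1: "ex3 (\<lambda>z. exp (L z)) 1 l1 (l2 + l1^2/2)"
    using ex3_exp_scale[OF exL, of 1] by simp
  have E2: "ex3p (\<lambda>z. exp (L z)) a1 a2 a3" unfolding a1_def a2_def a3_def
  proof (rule ex3p_cong[OF taylor_div[OF hol h0], where s=1])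
    fix z :: complex assume "0 < cmod z" "cmod z < 1"
    then show "exp (L z) = h z / z" using Lexp by auto
  qed auto
  from ex3p_unique[OF ex3_ex3p[OF E1] E2] have u: "a1 = 1" "l1 = a2" "l2 = a3 - a2^2/2"
    by (auto simp: algebra_simps)
  have E: "ex3 (\<lambda>z. exp (L z)) 1 a2 a3" using E1 by (rule ex3_eq) (simp_all add: u)
  have Emu: "ex3 (\<lambda>z. exp (of_real mu * L z)) 1 (of_real mu * l1) (of_real mu * l2 + (of_real mu)^2 * l1^2 / 2)"
    by (rule ex3_exp_scale[OF exL])
  have Emu1: "ex3 (\<lambda>z. exp (of_real (mu - 1) * L z)) 1 (of_real (mu - 1) * l1) (of_real (mu - 1) * l2 + (of_real (mu - 1))^2 * l1^2 / 2)"
    by (rule ex3_exp_scale[OF exL])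
  have dhol: "deriv h holomorphic_on unit_disk" using hol by (intro holomorphic_deriv) auto
  have D: "ex3 (deriv h) 1 (2 * a2) (3 * a3)"
  proof -
    have d0: "deriv h 0 = 1" using u(1) unfolding a1_def coef_1 .
    have cd1: "coef (deriv h) 1 = 2 * a2" using coef_deriv[of h 1] unfolding a2_def by (simp add: eval_nat_numeral)
    have cd2: "coef (deriv h) 2 = 3 * a3" using coef_deriv[of h 2] unfolding a3_def by (simp add: eval_nat_numeral)
    have "deriv (deriv h) 0 = 2 * a2" using cd1 unfolding coef_1 .
    with taylor_ex3[OF dhol] show ?thesis using d0 cd2 by simp
  qed
  have N1: "ex3 (\<lambda>z. (1 - of_real lam) * exp (of_real mu * L z) + (of_real lam * deriv h z) * exp (of_real (mu - 1) * L z))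
     ((1 - of_real lam) * 1 + (of_real lam * 1) * 1)
     ((1 - of_real lam) * (of_real mu * l1) + ((of_real lam * 1) * (of_real (mu - 1) * l1) + (of_real lam * (2 * a2)) * 1))
     ((1 - of_real lam) * (of_real mu * l2 + (of_real mu)^2 * l1^2 / 2) +
      ((of_real lam * 1) * (of_real (mu - 1) * l2 + (of_real (mu - 1))^2 * l1^2 / 2) +
       (of_real lam * (2 * a2)) * (of_real (mu - 1) * l1) + (of_real lam * (3 * a3)) * 1))"
    by (intro ex3_add ex3_scale ex3_mult Emu Emu1 D)
  have N: "ex3 (N_expr lam mu h L) 1 ((of_real mu + of_real lam) * a2)
     ((of_real mu + 2 * of_real lam) * (a3 + (of_real mu - 1) / 2 * a2^2))"
  proof (rule ex3_eq[OF ex3_cong[OF N1 zero_less_one]])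
    fix z :: complex
    show "N_expr lam mu h L z = (1 - of_real lam) * exp (of_real mu * L z) + (of_real lam * deriv h z) * exp (of_real (mu - 1) * L z)"
      by (simp add: N_expr_def)
  qed (simp_all add: u algebra_simps power2_eq_square field_simps)
  from sub obtain w where whol: "w holomorphic_on unit_disk" and wmap: "w ` unit_disk \<subseteq> unit_disk"
    and w0: "w 0 = 0" and weq: "\<And>z. z \<in> unit_disk \<Longrightarrow> N_expr lam mu h L z = phi (w z)"
    unfolding subord_def by blast
  define w1 where "w1 = deriv w 0"
  define w2 where "w2 = coef w 2"
  have W: "ex3 w 0 w1 w2" using taylor_ex3[OF whol] w0 by (simp add: w1_def w2_def)
  have P: "ex3 phi 1 (coef phi 1) (coef phi 2)" using taylor_ex3[OF phol] p0 unfolding coef_1 by simp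
  have PW: "ex3 (N_expr lam mu h L) 1 (coef phi 1 * w1) (coef phi 1 * w2 + coef phi 2 * w1^2)"
    using ex3_comp[OF P W] by (rule ex3_cong[OF _ zero_less_one]) (simp add: weq)
  from ex3p_unique[OF ex3_ex3p[OF N] ex3_ex3p[OF PW]]
  have c: "(of_real mu + of_real lam) * a2 = coef phi 1 * w1"
     "(of_real mu + 2 * of_real lam) * (a3 + (of_real mu - 1) / 2 * a2^2) = coef phi 1 * w2 + coef phi 2 * w1^2"
    by auto
  have "cmod w2 \<le> 1" unfolding w2_def
    by (rule coef_le1[OF whol]) (use wmap in force)
  then show ?thesis using c u(1) E by (auto simp: a1_def a2_def a3_def)
qed


theorem corollary3p1:
  fixes lam mu :: real and phi f :: "complex \<Rightarrow> complex"
  assumes "lam \<ge> 1" and "mu \<ge> 0" and "phi_ok phi" and "N_class mu lam phi f"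
  shows "cmod (coef f 3 - (coef f 2)\<^sup>2) \<le> Re (deriv phi 0) / (2 * lam + mu)"
proof -
  from assms(3) have phol: "phi holomorphic_on unit_disk" and p0: "phi 0 = 1"
    and dR: "deriv phi 0 \<in> \<real>" and dpos: "Re (deriv phi 0) > 0"
    unfolding phi_ok_def by auto
  from assms(4) obtain g L M where bi: "bi_univalent f" and inv: "inverse_ext f g"
    and lbL: "log_branch f L" and subL: "subord (N_expr lam mu f L) phi"
    and lbM: "log_branch g M" and subM: "subord (N_expr lam mu g M) phi"
    unfolding N_class_def by blast
  from bi have fhol: "f holomorphic_on unit_disk" and f0: "f 0 = 0" and injf: "inj_on f unit_disk"
    unfolding bi_univalent_def class_A_def by auto
  from inv have ghol: "g holomorphic_on unit_disk" unfolding inverse_ext_def by auto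
  from inv obtain r where r: "r > 0" and gr: "\<And>w. w \<in> ball 0 r \<Longrightarrow> g w \<in> unit_disk \<and> f (g w) = w"
    unfolding inverse_ext_def by blast
  have g0: "g 0 = 0"
  proof -
    have "g 0 \<in> unit_disk" "f (g 0) = 0" using gr[of 0] r by auto
    then show ?thesis using injf f0 by (metis centre_in_ball inj_on_contraD zero_less_one)
  qed
  from lbL have L0: "L 0 = 0" and Lexp: "\<And>z. z \<in> unit_disk - {0} \<Longrightarrow> exp (L z) = f z / z"
    unfolding log_branch_def by auto
  from lbM have M0: "M 0 = 0" and Mexp: "\<And>z. z \<in> unit_disk - {0} \<Longrightarrow> exp (M z) = g z / z"
    unfolding log_branch_def by auto
  define a2 where "a2 = coef f 2"
  define a3 where "a3 = coef f 3"
  define b2 where "b2 = coef g 2"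
  define b3 where "b3 = coef g 3"
  define B1 where "B1 = coef phi 1"
  define B2 where "B2 = coef phi 2"
  define m where "m = (of_real mu :: complex)"
  define l where "l = (of_real lam :: complex)"
  from main_gen[OF fhol f0 lbL subL phol p0] obtain w1 w2 where
    Ef: "ex3 (\<lambda>z. exp (L z)) 1 a2 a3" and w2: "cmod w2 \<le> 1"
    and c1: "(m + l) * a2 = B1 * w1" and c2: "(m + 2 * l) * (a3 + (m - 1) / 2 * a2^2) = B1 * w2 + B2 * w1^2"
    unfolding a2_def a3_def B1_def B2_def m_def l_def by blast
  from main_gen[OF ghol g0 lbM subM phol p0] obtain v1 v2 where
    g1: "coef g 1 = 1" and Eg: "ex3 (\<lambda>z. exp (M z)) 1 b2 b3" and v2: "cmod v2 \<le> 1"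
    and d1: "(m + l) * b2 = B1 * v1" and d2: "(m + 2 * l) * (b3 + (m - 1) / 2 * b2^2) = B1 * v2 + B2 * v1^2"
    unfolding b2_def b3_def B1_def B2_def m_def l_def by blast
  have Gw: "ex3 g 0 1 b2" using taylor_ex3[OF ghol] g0 g1 unfolding coef_1 b2_def by simp
  have P1: "ex3 (\<lambda>w. exp (M w) * exp (L (g w))) (1 * 1) (1 * (a2 * 1) + b2 * 1) (1 * (a2 * b2 + a3 * 1^2) + b2 * (a2 * 1) + b3 * 1)"
    by (rule ex3_mult[OF Eg ex3_comp[OF Ef Gw]])
  have P2: "ex3 (\<lambda>w. exp (M w) * exp (L (g w))) 1 0 0"
  proof (rule ex3_cong[OF ex3_const, where s="min r 1"])
    show "0 < min r 1" using r by simp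
    fix w :: complex assume w: "cmod w < min r 1"
    show "exp (M w) * exp (L (g w)) = 1"
    proof (cases "w = 0")
      case True then show ?thesis using M0 g0 L0 by simp
    next
      case False
      have gw: "g w \<in> unit_disk" "f (g w) = w" using gr[of w] w by auto
      have gnz: "g w \<noteq> 0" using gw f0 False by auto
      have "exp (M w) = g w / w" using Mexp[of w] w False by auto
      moreover have "exp (L (g w)) = w / g w" using Lexp[of "g w"] gw gnz by auto
      ultimately show ?thesis using False gnz by simp
    qed
  qed
  from ex3p_unique[OF ex3_ex3p[OF P1] ex3_ex3p[OF P2]]
  have u1: "1 * (a2 * 1) + b2 * 1 = 0" and u2: "1 * (a2 * b2 + a3 * 1^2) + b2 * (a2 * 1) + b3 * 1 = 0"
    by blast+
  from u1 have "b2 + a2 = 0" by (simp add: add.commute)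
  then have e1: "b2 = - a2" by (simp only: eq_neg_iff_add_eq_0)
  from u2 have "b3 + (a2 * b2 + a3 + b2 * a2) = 0" by (simp add: add.commute add.left_commute)
  then have "b3 = - (a2 * b2 + a3 + b2 * a2)" by (simp only: eq_neg_iff_add_eq_0)
  then have e2: "b3 = 2 * a2^2 - a3" unfolding e1 by (simp add: power2_eq_square)
  have B1R: "B1 = of_real (Re (deriv phi 0))" using dR unfolding B1_def coef_1
    by (metis Reals_cases Re_complex_of_real)
  have B1nz: "B1 \<noteq> 0" using dpos B1R by auto
  have "B1 * v1 = (m + l) * b2" using d1 by simp
  also have "\<dots> = - ((m + l) * a2)" by (simp add: e1)
  also have "\<dots> = - (B1 * w1)" by (simp add: c1)
  finally have "B1 * v1 = - (B1 * w1)" .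
  then have ev1: "v1 = - w1" using B1nz by (metis mult_left_cancel mult_minus_right)
  have key: "2 * (m + 2 * l) * (a3 - a2^2) = B1 * (w2 - v2)"
  proof -
    have "(m + 2 * l) * (a3 + (m - 1) / 2 * a2^2) - (m + 2 * l) * (b3 + (m - 1) / 2 * b2^2) = B1 * (w2 - v2)"
      using c2 d2 ev1 by (simp add: algebra_simps)
    then show ?thesis unfolding e1 e2 by (simp add: algebra_simps power2_eq_square)
  qed
  define K where "K = mu + 2 * lam"
  have Kpos: "K > 0" using assms(1,2) by (simp add: K_def)
  have mK: "m + 2 * l = of_real K" by (simp add: m_def l_def K_def)
  have "a3 - a2^2 = B1 * (w2 - v2) / (2 * of_real K)"
    using key Kpos unfolding mK by (simp add: field_simps)
  then have "cmod (a3 - a2^2) = Re (deriv phi 0) * cmod (w2 - v2) / (2 * K)"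
    using Kpos dpos by (simp add: B1R norm_divide norm_mult)
  also have "\<dots> \<le> Re (deriv phi 0) * 2 / (2 * K)"
  proof -
    have "cmod (w2 - v2) \<le> 2" using w2 v2 norm_triangle_ineq4[of w2 v2] by linarith
    then show ?thesis using Kpos dpos by (intro divide_right_mono mult_left_mono) auto
  qed
  also have "\<dots> = Re (deriv phi 0) / K" using Kpos by simp
  also have "\<dots> = Re (deriv phi 0) / (2 * lam + mu)" by (simp add: K_def add.commute)
  finally show ?thesis unfolding a2_def a3_def .
qed


end
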